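(* Let $\delta\in(0,1/2)$ and $x\in\overline{\mathbb{D}}_{1-\delta}$. Then $x$ can be mapped to any other point of $\overline{\mathbb{D}}_{1-\delta}$ by a $K$-quasiconformal homeomorphism of $\overline{\mathbb{D}}$ equal to the identity on $\partial\mathbb{D}$ with $K=O((\log\delta)^2)$, with a universal implicit constant.
   Context: $\mathbb{D}_r$ denotes the open disk of radius $r$ centered at $0$, $\mathbb{D}=\mathbb{D}_1$. *)

theory Defs
  imports "HOL-Analysis.Analysis"
begin

text \<open>Quasiconformality is given by the standard analytic definition:
  a homeomorphism in the Sobolev class \<open>W^{1,2}_loc\<close> whose weak complex
  derivatives satisfy the Beltrami inequality
  \<open>|f_zbar| \<le> k |f_z|\<close> a.e., with \<open>k = (K-1)/(K+1)\<close>.\<close>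

definition dx :: "(complex \<Rightarrow> real) \<Rightarrow> complex \<Rightarrow> real" where
  "dx \<phi> z = frechet_derivative \<phi> (at z) 1"

definition dy :: "(complex \<Rightarrow> real) \<Rightarrow> complex \<Rightarrow> real" where
  "dy \<phi> z = frechet_derivative \<phi> (at z) \<i>"

definition test_fun :: "complex set \<Rightarrow> (complex \<Rightarrow> real) \<Rightarrow> bool" where
  "test_fun U \<phi> \<longleftrightarrow>
     (\<forall>z. \<phi> differentiable (at z)) \<and>
     continuous_on UNIV (dx \<phi>) \<and> continuous_on UNIV (dy \<phi>) \<and>
     compact (closure {z. \<phi> z \<noteq> 0}) \<and> closure {z. \<phi> z \<noteq> 0} \<subseteq> U"

definition L2_loc :: "complex set \<Rightarrow> (complex \<Rightarrow> complex) \<Rightarrow> bool" where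
  "L2_loc U g \<longleftrightarrow> set_borel_measurable lborel U g \<and>
     (\<forall>C. compact C \<and> C \<subseteq> U \<longrightarrow> set_integrable lborel C (\<lambda>z. (cmod (g z))\<^sup>2))"

definition weak_partials ::
  "complex set \<Rightarrow> (complex \<Rightarrow> complex) \<Rightarrow> (complex \<Rightarrow> complex) \<Rightarrow> (complex \<Rightarrow> complex) \<Rightarrow> bool" where
  "weak_partials U f gx gy \<longleftrightarrow>
     (\<forall>\<phi>. test_fun U \<phi> \<longrightarrow>
        (LINT z:U|lborel. of_real (dx \<phi> z) * f z) = - (LINT z:U|lborel. of_real (\<phi> z) * gx z) \<and>
        (LINT z:U|lborel. of_real (dy \<phi> z) * f z) = - (LINT z:U|lborel. of_real (\<phi> z) * gy z))"

definition quasiconformal_on :: "real \<Rightarrow> complex set \<Rightarrow> (complex \<Rightarrow> complex) \<Rightarrow> bool" where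
  "quasiconformal_on K U f \<longleftrightarrow>
     1 \<le> K \<and> open U \<and> (\<exists>g. homeomorphism U (f ` U) f g) \<and>
     L2_loc U f \<and>
     (\<exists>gx gy. weak_partials U f gx gy \<and> L2_loc U gx \<and> L2_loc U gy \<and>
        (AE z in lborel. z \<in> U \<longrightarrow>
           cmod ((gx z + \<i> * gy z) / 2) \<le> (K - 1) / (K + 1) * cmod ((gx z - \<i> * gy z) / 2)))"

end

theory Submission
  imports Defs
begin
lemma integral_partial_zero:
  fixes \<psi> :: "complex \<Rightarrow> complex" and v :: complex
  assumes der: "\<And>z. (\<psi> has_derivative Dp z) (at z)"
    and cont: "continuous_on UNIV (\<lambda>z. Dp z v)"
    and S: "compact S" and zero: "\<And>z. z \<notin> S \<Longrightarrow> \<psi> z = 0"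
  shows "integral\<^sup>L lborel (\<lambda>z. Dp z v) = 0"
proof -
  obtain R where R0: "R > 0" and RS: "\<forall>x\<in>S. norm x \<le> R"
    using compact_imp_bounded[OF S] unfolding bounded_pos by blast
  have R: "R \<ge> 0" "S \<subseteq> cball 0 R" using R0 RS by auto
  define T where "T = cball (0::complex) (R + 2 * norm v)"
  have cT: "compact ((\<lambda>z. Dp z v) ` T)"
    unfolding T_def by (rule compact_continuous_image[OF continuous_on_subset[OF cont]]) auto
  obtain M where M': "\<forall>x\<in>(\<lambda>z. Dp z v) ` T. norm x \<le> M"
    using compact_imp_bounded[OF cT] unfolding bounded_iff by blast
  then have M: "\<And>w. w \<in> T \<Longrightarrow> norm (Dp w v) \<le> M" by blast
  have lin: "\<And>z. linear (Dp z)" using der has_derivative_linear by blast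
  have contpsi: "continuous_on UNIV \<psi>"
    using der has_derivative_continuous continuous_at_imp_continuous_on by blast
  have psi_ind: "\<psi> = (\<lambda>z. indicator S z *\<^sub>R \<psi> z)"
    using zero by (auto simp: fun_eq_iff indicator_def)
  have int_psi: "integrable lborel \<psi>"
    by (subst psi_ind) (rule borel_integrable_compact[OF S continuous_on_subset[OF contpsi]], auto)
  have meas_psi: "\<psi> \<in> borel_measurable borel"
    using contpsi borel_measurable_continuous_onI by blast
  have shift: "integral\<^sup>L lborel (\<lambda>z. \<psi> (c + z)) = integral\<^sup>L lborel \<psi>"
     "integrable lborel (\<lambda>z. \<psi> (c + z))" for c
  proof -
    have "integral\<^sup>L lborel \<psi> = integral\<^sup>L (distr lborel borel ((+) c)) \<psi>"
      by (simp add: lborel_distr_plus)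
    also have "\<dots> = integral\<^sup>L lborel (\<lambda>z. \<psi> (c + z))"
      by (rule integral_distr) (auto simp: meas_psi)
    finally show "integral\<^sup>L lborel (\<lambda>z. \<psi> (c + z)) = integral\<^sup>L lborel \<psi>" by simp
    have "integrable (distr lborel borel ((+) c)) \<psi>"
      by (simp add: lborel_distr_plus int_psi)
    then show "integrable lborel (\<lambda>z. \<psi> (c + z))"
      by (subst (asm) integrable_distr_eq) (auto simp: meas_psi)
  qed
  define h where "h n = 1 / real (Suc n)" for n
  have hpos: "h n > 0" "h n \<le> 1" for n by (auto simp: h_def)
  define s where "s n z = (1 / h n) *\<^sub>R (\<psi> (z + h n *\<^sub>R v) - \<psi> z)" for n z
  have int_s: "integral\<^sup>L lborel (s n) = 0" for n
  proof -
    have "integral\<^sup>L lborel (s n) = (1 / h n) *\<^sub>R (integral\<^sup>L lborel (\<lambda>z. \<psi> (h n *\<^sub>R v + z)) - integral\<^sup>L lborel \<psi>)"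
      unfolding s_def using shift(2)[of "h n *\<^sub>R v"] int_psi
      by (simp add: add.commute)
    then show ?thesis using shift(1) by simp
  qed
  define w where "w z = indicator (cball 0 (R + norm v)) z *\<^sub>R M" for z :: complex
  have int_w: "integrable lborel w"
    unfolding w_def by (rule borel_integrable_compact) auto
  have bound: "norm (s n z) \<le> w z" for n z
  proof (cases "norm z \<le> R + norm v")
    case False
    have "z \<notin> S"
    proof
      assume "z \<in> S" then have "cmod z \<le> R" using RS by blast
      then show False using False norm_ge_zero[of v] by linarith
    qed
    moreover have "z + h n *\<^sub>R v \<notin> S"
    proof
      assume "z + h n *\<^sub>R v \<in> S"
      then have "norm (z + h n *\<^sub>R v) \<le> R" using R by auto
      moreover have "norm (h n *\<^sub>R v) \<le> norm v" using hpos[of n] by (simp add: mult_left_le_one_le)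
      ultimately show False using False norm_triangle_ineq2[of z "- (h n *\<^sub>R v)"] by simp
    qed
    ultimately show ?thesis using False by (simp add: s_def zero w_def)
  next
    case True
    define g where "g t = \<psi> (z + t *\<^sub>R v)" for t :: real
    have gder: "(g has_derivative (\<lambda>t. Dp (z + x *\<^sub>R v) (t *\<^sub>R v))) (at x)" for x
      unfolding g_def
      by (rule has_derivative_compose[OF _ der, of "\<lambda>t. z + t *\<^sub>R v"]) (auto intro!: derivative_eq_intros)
    have gcont: "continuous_on {0..h n} g"
      unfolding g_def by (intro continuous_on_compose2[OF contpsi]) (auto intro!: continuous_intros)
    obtain x where x: "x \<in> {0<..<h n}" "norm (g (h n) - g 0) \<le> norm (Dp (z + x *\<^sub>R v) ((h n - 0) *\<^sub>R v))"
      using mvt_general[OF hpos(1) gcont gder] by blast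
    have "Dp (z + x *\<^sub>R v) ((h n - 0) *\<^sub>R v) = h n *\<^sub>R Dp (z + x *\<^sub>R v) v"
      using lin linear_scale by (simp add: linear_cmul)
    moreover have "z + x *\<^sub>R v \<in> T"
    proof -
      have "norm (x *\<^sub>R v) \<le> norm v" using x(1) hpos[of n] by (simp add: mult_left_le_one_le)
      then have "norm (z + x *\<^sub>R v) \<le> R + 2 * norm v" using True norm_triangle_ineq[of z "x *\<^sub>R v"] by simp
      then show ?thesis by (simp add: T_def)
    qed
    ultimately have "norm (g (h n) - g 0) \<le> h n * M" using x(2) M hpos[of n]
      by (metis (no_types, lifting) abs_of_pos mult_left_mono norm_scaleR order_trans less_eq_real_def)
    moreover have "norm (s n z) = norm (g (h n) - g 0) / h n"
      using hpos[of n] by (simp add: s_def g_def)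
    ultimately have "norm (s n z) \<le> M" using hpos[of n]
      by (simp add: divide_le_eq mult.commute)
    then show ?thesis using True by (simp add: w_def)
  qed
  have lim: "(\<lambda>n. s n z) \<longlonglongrightarrow> Dp z v" for z
  proof -
    define g where "g t = \<psi> (z + t *\<^sub>R v)" for t :: real
    have d1: "((\<lambda>t. z + t *\<^sub>R v) has_derivative (\<lambda>t. t *\<^sub>R v)) (at (0::real))"
      by (auto intro!: derivative_eq_intros)
    have gder: "(g has_derivative (\<lambda>t. Dp z (t *\<^sub>R v))) (at 0)"
      unfolding g_def using has_derivative_compose[OF d1, of \<psi> "Dp z"] der[of z] by simp
    then have "((\<lambda>t. norm (g (0 + t) - g 0 - Dp z (t *\<^sub>R v)) / norm t) \<longlongrightarrow> 0) (at 0)"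
      unfolding has_derivative_at by simp
    moreover have "filterlim h (at 0) sequentially"
    proof -
      have "h = (\<lambda>n. inverse (real (Suc n)))" by (simp add: h_def fun_eq_iff divide_inverse)
      then have "h \<longlonglongrightarrow> 0" using LIMSEQ_inverse_real_of_nat by simp
      then show ?thesis unfolding filterlim_at using hpos
        by (auto intro!: always_eventually) (metis less_irrefl hpos(1))
    qed
    ultimately have "((\<lambda>n. norm (g (h n) - g 0 - Dp z (h n *\<^sub>R v)) / norm (h n)) \<longlongrightarrow> 0) sequentially"
      using filterlim_compose[of _ "nhds 0" "at 0" h sequentially] by (simp add: o_def)
    moreover have "norm (g (h n) - g 0 - Dp z (h n *\<^sub>R v)) / norm (h n) = norm (s n z - Dp z v)" for n
    proof -
      have "Dp z (h n *\<^sub>R v) = h n *\<^sub>R Dp z v" using lin by (simp add: linear_cmul)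
      then have "g (h n) - g 0 - Dp z (h n *\<^sub>R v) = h n *\<^sub>R (s n z - Dp z v)"
        using hpos[of n] by (simp add: s_def g_def algebra_simps)
      then show ?thesis using hpos[of n] by simp
    qed
    ultimately have "((\<lambda>n. norm (s n z - Dp z v)) \<longlongrightarrow> 0) sequentially" by simp
    then show ?thesis using tendsto_norm_zero_iff LIM_zero_cancel by blast
  qed
  have "(\<lambda>n. integral\<^sup>L lborel (s n)) \<longlonglongrightarrow> integral\<^sup>L lborel (\<lambda>z. Dp z v)"
  proof (rule integral_dominated_convergence[OF _ _ int_w])
    show "(\<lambda>z. Dp z v) \<in> borel_measurable lborel"
      using borel_measurable_continuous_onI[OF cont] by simp
    show "s n \<in> borel_measurable lborel" for n
      unfolding s_def using meas_psi by simp
  qed (use lim bound in auto)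
  then show ?thesis using int_s by (simp add: LIMSEQ_const_iff)
qed

lemma L2_loc_cont:
  assumes U: "open U" and c: "continuous_on U h"
  shows "L2_loc U h"
  unfolding L2_loc_def set_borel_measurable_def set_integrable_def
proof (intro conjI allI impI)
  show "(\<lambda>x. indicator U x *\<^sub>R h x) \<in> borel_measurable lborel"
    using borel_measurable_continuous_on_indicator[OF borel_open[OF U] c] by simp
  fix C assume C: "compact C \<and> C \<subseteq> U"
  show "integrable lborel (\<lambda>x. indicator C x *\<^sub>R (cmod (h x))\<^sup>2)"
    using C by (intro borel_integrable_compact) (auto intro!: continuous_intros intro: continuous_on_subset[OF c])
qed

lemma cont_on_UNIV_pieces:
  assumes "open A" "open B" "A \<union> B = UNIV" "continuous_on A f" "continuous_on B f"
  shows "continuous_on UNIV f"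
  using continuous_on_open_Union[of "{A,B}" f] assms by auto

lemma weak_partials_C1:
  fixes f a b :: "complex \<Rightarrow> complex"
  assumes U: "open U"
    and contf: "continuous_on U f"
    and der: "\<And>z. z \<in> U \<Longrightarrow> (f has_derivative (\<lambda>h. a z * h + b z * cnj h)) (at z)"
    and ca: "continuous_on U a" and cb: "continuous_on U b"
  shows "weak_partials U f (\<lambda>z. a z + b z) (\<lambda>z. \<i> * (a z - b z))"
  unfolding weak_partials_def
proof (intro allI impI)
  fix \<phi> assume tf: "test_fun U \<phi>"
  define S where "S = closure {z. \<phi> z \<noteq> 0}"
  have diff: "\<And>z. \<phi> differentiable (at z)" and cdx: "continuous_on UNIV (dx \<phi>)"
    and cdy: "continuous_on UNIV (dy \<phi>)" and S: "compact S" "S \<subseteq> U"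
    using tf unfolding test_fun_def S_def by auto
  define Dphi where "Dphi z = frechet_derivative \<phi> (at z)" for z
  have dphi: "(\<phi> has_derivative Dphi z) (at z)" for z
    unfolding Dphi_def using diff[of z] frechet_derivative_works by blast
  have phi0: "\<phi> z = 0" if "z \<notin> S" for z
    using that closure_subset[of "{z. \<phi> z \<noteq> 0}"] unfolding S_def by auto
  have oS: "open (- S)" using S compact_imp_closed by blast
  have Dphi0: "Dphi z = (\<lambda>h. 0)" if "z \<notin> S" for z
  proof -
    have "((\<lambda>_. 0::real) has_derivative (\<lambda>h. 0)) (at z)" by simp
    then have d0: "(\<phi> has_derivative (\<lambda>h. 0)) (at z)"
      by (rule has_derivative_transform_within_open[OF _ oS]) (use that phi0 in auto)
    show ?thesis unfolding Dphi_def using frechet_derivative_at[OF d0] by simp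
  qed
  have dxD: "dx \<phi> z = Dphi z 1" and dyD: "dy \<phi> z = Dphi z \<i>" for z
    by (simp_all add: dx_def dy_def Dphi_def)
  define \<psi> where "\<psi> z = of_real (\<phi> z) * f z" for z
  define Dp where "Dp z h = (if z \<in> U then of_real (Dphi z h) * f z + of_real (\<phi> z) * (a z * h + b z * cnj h) else 0)" for z h
  have psider: "(\<psi> has_derivative Dp z) (at z)" for z
  proof (cases "z \<in> U")
    case True
    have "((\<lambda>z. of_real (\<phi> z) * f z) has_derivative
           (\<lambda>h. of_real (\<phi> z) * (a z * h + b z * cnj h) + of_real (Dphi z h) * f z)) (at z)"
      by (rule has_derivative_mult[OF has_derivative_of_real[OF dphi] der[OF True]])
    then show ?thesis unfolding \<psi>_def Dp_def using True by (simp add: algebra_simps)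
  next
    case False
    then have "z \<notin> S" using S by auto
    have "((\<lambda>_. 0::complex) has_derivative (\<lambda>h. 0)) (at z)" by simp
    then have "(\<psi> has_derivative (\<lambda>h. 0)) (at z)"
      by (rule has_derivative_transform_within_open[OF _ oS]) (use \<open>z \<notin> S\<close> phi0 in \<open>auto simp: \<psi>_def\<close>)
    moreover have "Dp z = (\<lambda>h. 0)" using False by (simp add: Dp_def fun_eq_iff)
    ultimately show ?thesis by simp
  qed
  have Dp0: "Dp z v = 0" if "z \<notin> S" for z v
    using that Dphi0[OF that] phi0[OF that] by (simp add: Dp_def)
  have psi0: "\<psi> z = 0" if "z \<notin> S" for z
    using phi0[OF that] by (simp add: \<psi>_def)
  have US: "U \<union> - S = UNIV" using S by auto
  have key: "integral\<^sup>L lborel (\<lambda>z. indicator U z *\<^sub>R (of_real (d z) * f z))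
             = - integral\<^sup>L lborel (\<lambda>z. indicator U z *\<^sub>R (of_real (\<phi> z) * g z))"
    if dd: "\<And>z. d z = Dphi z v" and cd: "continuous_on UNIV d"
      and gg: "\<And>z. z \<in> U \<Longrightarrow> g z = a z * v + b z * cnj v" and cg: "continuous_on U g" for d g v
  proof -
    have cDp: "continuous_on UNIV (\<lambda>z. Dp z v)"
    proof (rule cont_on_UNIV_pieces[OF U oS US])
      have "continuous_on U (\<lambda>z. of_real (d z) * f z + of_real (\<phi> z) * g z)"
        using cd cg contf diff
        by (intro continuous_intros continuous_on_subset[OF cd])
           (auto intro: continuous_on_subset[OF differentiable_imp_continuous_on] simp: differentiable_on_def differentiable_at_withinI)
      then show "continuous_on U (\<lambda>z. Dp z v)"
        by (rule continuous_on_cong[THEN iffD1, rotated 2]) (auto simp: Dp_def dd gg)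
      show "continuous_on (- S) (\<lambda>z. Dp z v)"
        by (rule continuous_on_eq[OF continuous_on_const[of _ 0]]) (simp add: Dp0)
    qed
    have zero: "integral\<^sup>L lborel (\<lambda>z. Dp z v) = 0"
      by (rule integral_partial_zero[OF psider cDp S(1) psi0])
    have i1: "integrable lborel (\<lambda>z. indicator U z *\<^sub>R (of_real (d z) * f z))"
    proof -
      have "integrable lborel (\<lambda>z. indicator S z *\<^sub>R (of_real (d z) * f z))"
        using S by (intro borel_integrable_compact)
          (auto intro!: continuous_intros intro: continuous_on_subset[OF cd] continuous_on_subset[OF contf])
      moreover have "indicator S z *\<^sub>R (of_real (d z) * f z) = indicator U z *\<^sub>R (of_real (d z) * f z)" for z
        using S Dphi0[of z] dd[of z] by (auto simp: indicator_def)
      ultimately show ?thesis by simp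
    qed
    have i2: "integrable lborel (\<lambda>z. indicator U z *\<^sub>R (of_real (\<phi> z) * g z))"
    proof -
      have cphi: "continuous_on UNIV \<phi>"
        using diff differentiable_imp_continuous_within continuous_at_imp_continuous_on by blast
      have "integrable lborel (\<lambda>z. indicator S z *\<^sub>R (of_real (\<phi> z) * g z))"
        using S by (intro borel_integrable_compact)
          (auto intro!: continuous_intros intro: continuous_on_subset[OF cphi] continuous_on_subset[OF cg])
      moreover have "indicator S z *\<^sub>R (of_real (\<phi> z) * g z) = indicator U z *\<^sub>R (of_real (\<phi> z) * g z)" for z
        using S phi0[of z] by (auto simp: indicator_def)
      ultimately show ?thesis by simp
    qed
    have "(\<lambda>z. Dp z v) = (\<lambda>z. indicator U z *\<^sub>R (of_real (d z) * f z) + indicator U z *\<^sub>R (of_real (\<phi> z) * g z))"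
      by (auto simp: fun_eq_iff Dp_def dd gg indicator_def)
    then have "integral\<^sup>L lborel (\<lambda>z. indicator U z *\<^sub>R (of_real (d z) * f z)) + integral\<^sup>L lborel (\<lambda>z. indicator U z *\<^sub>R (of_real (\<phi> z) * g z)) = 0"
      using zero Bochner_Integration.integral_add[OF i1 i2] by simp
    then show ?thesis by (simp add: eq_neg_iff_add_eq_0)
  qed
  have cgx: "continuous_on U (\<lambda>z. a z + b z)" using ca cb by (intro continuous_intros)
  have cgy: "continuous_on U (\<lambda>z. \<i> * (a z - b z))" using ca cb by (intro continuous_intros)
  show "(LINT z:U|lborel. of_real (dx \<phi> z) * f z) = - (LINT z:U|lborel. of_real (\<phi> z) * (a z + b z)) \<and>
        (LINT z:U|lborel. of_real (dy \<phi> z) * f z) = - (LINT z:U|lborel. of_real (\<phi> z) * (\<i> * (a z - b z)))"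
    unfolding set_lebesgue_integral_def
    using key[of "dx \<phi>" 1 "\<lambda>z. a z + b z", OF dxD cdx _ cgx]
      key[of "dy \<phi>" \<i> "\<lambda>z. \<i> * (a z - b z)", OF dyD cdy _ cgy]
    by (simp add: algebra_simps)
qed

lemma qc_C1:
  fixes f a b :: "complex \<Rightarrow> complex"
  assumes U: "open U" and K: "1 \<le> K" and hom: "homeomorphism U (f ` U) f g"
    and der: "\<And>z. z \<in> U \<Longrightarrow> (f has_derivative (\<lambda>h. a z * h + b z * cnj h)) (at z)"
    and ca: "continuous_on U a" and cb: "continuous_on U b"
    and bel: "\<And>z. z \<in> U \<Longrightarrow> cmod (b z) \<le> (K - 1) / (K + 1) * cmod (a z)"
  shows "quasiconformal_on K U f"
  unfolding quasiconformal_on_def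
proof (intro conjI exI)
  have contf: "continuous_on U f" using hom by (simp add: homeomorphism_def)
  show "1 \<le> K" "open U" by fact+
  show "homeomorphism U (f ` U) f g" by fact
  show "L2_loc U f" by (rule L2_loc_cont[OF U contf])
  show "weak_partials U f (\<lambda>z. a z + b z) (\<lambda>z. \<i> * (a z - b z))"
    by (rule weak_partials_C1[OF U contf der ca cb])
  show "L2_loc U (\<lambda>z. a z + b z)" using ca cb by (intro L2_loc_cont[OF U] continuous_intros)
  show "L2_loc U (\<lambda>z. \<i> * (a z - b z))" using ca cb by (intro L2_loc_cont[OF U] continuous_intros)
  show "AE z in lborel. z \<in> U \<longrightarrow> cmod ((a z + b z + \<i> * (\<i> * (a z - b z))) / 2)
          \<le> (K - 1) / (K + 1) * cmod ((a z + b z - \<i> * (\<i> * (a z - b z))) / 2)"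
  proof (rule AE_I2, rule impI)
    fix z assume "z \<in> U"
    have e1: "(a z + b z + \<i> * (\<i> * (a z - b z))) / 2 = b z"
      by (simp add: algebra_simps)
    have e2: "(a z + b z - \<i> * (\<i> * (a z - b z))) / 2 = a z"
      by (simp add: algebra_simps)
    show "cmod ((a z + b z + \<i> * (\<i> * (a z - b z))) / 2)
          \<le> (K - 1) / (K + 1) * cmod ((a z + b z - \<i> * (\<i> * (a z - b z))) / 2)"
      unfolding e1 e2 using bel[OF \<open>z \<in> U\<close>] .
  qed
qed

definition PP :: "complex \<Rightarrow> real" where "PP z = 1 - (Re z)\<^sup>2 - (Im z)\<^sup>2"
definition NN :: "complex \<Rightarrow> real" where "NN z = (PP z)\<^sup>2 + 4 * (Im z)\<^sup>2"
definition om2 :: "complex \<Rightarrow> real" where "om2 z = (PP z)\<^sup>2 / NN z"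
definition rho2 :: "complex \<Rightarrow> complex" where
 "rho2 z = of_real (-16 * Re z * (Im z)\<^sup>2 * PP z / (NN z)\<^sup>2)
          + \<i> * of_real (8 * Im z * PP z * (PP z + 2 * (Im z)\<^sup>2) / (NN z)\<^sup>2)"
definition tau :: "real \<Rightarrow> complex \<Rightarrow> real" where "tau D z = tanh (D * om2 z / 2)"
definition mob :: "real \<Rightarrow> complex \<Rightarrow> complex" where
  "mob s z = (z + of_real s) / (1 + of_real s * z)"
definition f0 :: "real \<Rightarrow> complex \<Rightarrow> complex" where "f0 D z = mob (tau D z) z"
definition g0 :: "real \<Rightarrow> complex \<Rightarrow> complex" where "g0 D z = mob (- tau D z) z"

lemma PP_cmod: "PP z = 1 - (cmod z)\<^sup>2"
  by (simp add: PP_def cmod_power2)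

lemma N2_eq: "(cmod (1 - z\<^sup>2))\<^sup>2 = NN z"
  unfolding cmod_power2 by (simp add: NN_def PP_def power2_eq_square algebra_simps)

lemma om2_cmod: "om2 z = (1 - (cmod z)\<^sup>2)\<^sup>2 / (cmod (1 - z\<^sup>2))\<^sup>2"
  by (simp add: om2_def PP_cmod N2_eq)

lemma PP_pos: "cmod z < 1 \<Longrightarrow> PP z > 0"
  by (simp add: PP_cmod power_less_one_iff abs_square_less_1)

lemma PP_nonneg: "cmod z \<le> 1 \<Longrightarrow> PP z \<ge> 0"
  by (simp add: PP_cmod abs_square_le_1)

lemma NN_pos: "cmod z < 1 \<Longrightarrow> NN z > 0"
  using PP_pos[of z] by (simp add: NN_def add_pos_nonneg)

lemma om2_bounds: "cmod z \<le> 1 \<Longrightarrow> 0 \<le> om2 z \<and> om2 z \<le> 1"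
proof -
  assume "cmod z \<le> 1"
  have le: "(PP z)\<^sup>2 \<le> NN z" by (simp add: NN_def)
  show ?thesis
  proof (cases "NN z = 0")
    case True then show ?thesis by (simp add: om2_def)
  next
    case False
    then have "NN z > 0" using le by (metis order.not_eq_order_implies_strict zero_le_power2 order_trans)
    then show ?thesis using le by (simp add: om2_def divide_le_eq_1)
  qed
qed

lemma om2_sphere: "cmod z = 1 \<Longrightarrow> om2 z = 0"
  by (simp add: om2_def PP_cmod)

lemma om2_0: "om2 0 = 1"
  by (simp add: om2_def NN_def PP_def)

lemma tau_bounds: "D \<ge> 0 \<Longrightarrow> cmod z \<le> 1 \<Longrightarrow> 0 \<le> tau D z \<and> tau D z \<le> tanh (D / 2)"
proof -
  assume D: "D \<ge> 0" and z: "cmod z \<le> 1"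
  then have o: "0 \<le> om2 z" "om2 z \<le> 1" using om2_bounds by auto
  have "D * om2 z \<le> D" using D o by (rule mult_right_le_one_le)
  then show ?thesis using D o by (simp add: tau_def)
qed

lemma tau_abs: "\<bar>tau D z\<bar> < 1"
  using tanh_real_bounds[of "D * om2 z / 2"] by (auto simp: tau_def)

lemma tau_sphere: "cmod z = 1 \<Longrightarrow> tau D z = 0"
  by (simp add: tau_def om2_sphere)

lemma tau_0: "tau D 0 = tanh (D / 2)"
  by (simp add: tau_def om2_0)

lemma mob_denom_ge:
  assumes "\<bar>s\<bar> \<le> T" "cmod z \<le> 1"
  shows "1 - T \<le> cmod (1 + of_real s * z)"
proof -
  have "cmod (of_real s * z) \<le> T"
    using assms by (simp add: norm_mult) (metis abs_ge_zero mult_le_one mult.commute order_trans mult_right_le_one_le norm_ge_zero)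
  moreover have "1 - cmod (of_real s * z) \<le> cmod (1 + of_real s * z)"
    using norm_diff_ineq[of 1 "of_real s * z"] by simp
  ultimately show ?thesis by linarith
qed

lemma mob_denom_nz:
  assumes "\<bar>s\<bar> < 1" "cmod z \<le> 1"
  shows "1 + of_real s * z \<noteq> 0"
  using mob_denom_ge[of s "\<bar>s\<bar>" z] assms by auto

lemma mob_key:
  "(cmod (1 + of_real s * z))\<^sup>2 - (cmod (z + of_real s))\<^sup>2 = (1 - s\<^sup>2) * (1 - (cmod z)\<^sup>2)"
  unfolding cmod_power2 by (simp add: power2_eq_square algebra_simps)

lemma mob_norm:
  assumes "1 + of_real s * z \<noteq> 0"
  shows "1 - (cmod (mob s z))\<^sup>2 = (1 - s\<^sup>2) * (1 - (cmod z)\<^sup>2) / (cmod (1 + of_real s * z))\<^sup>2"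
proof -
  have "(cmod (mob s z))\<^sup>2 = (cmod (z + of_real s))\<^sup>2 / (cmod (1 + of_real s * z))\<^sup>2"
    by (simp add: mob_def norm_divide power_divide)
  moreover have "(cmod (1 + of_real s * z))\<^sup>2 \<noteq> 0" using assms by simp
  ultimately have "1 - (cmod (mob s z))\<^sup>2 = ((cmod (1 + of_real s * z))\<^sup>2 - (cmod (z + of_real s))\<^sup>2) / (cmod (1 + of_real s * z))\<^sup>2"
    by (simp add: diff_divide_distrib)
  then show ?thesis by (simp add: mob_key)
qed

lemma mob_cball:
  assumes "\<bar>s\<bar> < 1" "cmod z \<le> 1"
  shows "cmod (mob s z) \<le> 1"
proof -
  have "0 \<le> (1 - s\<^sup>2) * (1 - (cmod z)\<^sup>2) / (cmod (1 + of_real s * z))\<^sup>2"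
    using assms by (intro divide_nonneg_nonneg mult_nonneg_nonneg) (auto simp: abs_square_le_1 abs_square_less_1 less_imp_le)
  then have "(cmod (mob s z))\<^sup>2 \<le> 1" using mob_norm[OF mob_denom_nz[OF assms]] by linarith
  then show ?thesis by (simp add: abs_square_le_1)
qed

lemma mob_ball:
  assumes "\<bar>s\<bar> < 1" "cmod z < 1"
  shows "cmod (mob s z) < 1"
proof -
  have nz: "1 + of_real s * z \<noteq> 0" using mob_denom_nz assms by auto
  have "0 < (1 - s\<^sup>2) * (1 - (cmod z)\<^sup>2) / (cmod (1 + of_real s * z))\<^sup>2"
    using assms nz by (intro divide_pos_pos mult_pos_pos) (auto simp: abs_square_less_1)
  then have "(cmod (mob s z))\<^sup>2 < 1" using mob_norm[OF nz] by linarith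
  then show ?thesis by (simp add: abs_square_less_1)
qed

lemma mob_sphere:
  assumes "\<bar>s\<bar> < 1" "cmod z = 1"
  shows "cmod (mob s z) = 1"
proof -
  have nz: "1 + of_real s * z \<noteq> 0" using mob_denom_nz assms by auto
  have "(cmod (mob s z))\<^sup>2 = 1" using mob_norm[OF nz] assms by simp
  then show ?thesis by (simp add: abs_square_eq_1)
qed

lemma mob_inv:
  assumes s: "\<bar>s\<bar> < 1" and nz: "1 + of_real s * z \<noteq> 0"
  shows "mob (- s) (mob s z) = z"
proof -
  have s2: "1 - (complex_of_real s)\<^sup>2 \<noteq> 0"
  proof
    assume "1 - (complex_of_real s)\<^sup>2 = 0"
    then have "s\<^sup>2 = 1" by (metis of_real_1 of_real_eq_iff of_real_power right_minus_eq)
    then show False using s by (simp add: abs_square_eq_1)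
  qed
  have e1: "mob s z + of_real (- s) = z * (1 - (of_real s)\<^sup>2) / (1 + of_real s * z)"
    using nz by (simp add: mob_def field_simps power2_eq_square)
  have e2: "1 + of_real (- s) * mob s z = (1 - (of_real s)\<^sup>2) / (1 + of_real s * z)"
    using nz by (simp add: mob_def field_simps power2_eq_square)
  have "mob (- s) (mob s z) = (mob s z + of_real (- s)) / (1 + of_real (- s) * mob s z)"
    unfolding mob_def[of "- s" "mob s z"] ..
  also have "\<dots> = (z * (1 - (of_real s)\<^sup>2) / (1 + of_real s * z)) / ((1 - (of_real s)\<^sup>2) / (1 + of_real s * z))"
    by (simp only: e1 e2)
  also have "\<dots> = z" using nz s2 by simp
  finally show ?thesis .
qed

lemma mob_one_minus_sq:
  assumes nz: "1 + of_real s * z \<noteq> 0"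
  shows "1 - (mob s z)\<^sup>2 = (1 - (of_real s)\<^sup>2) * (1 - z\<^sup>2) / (1 + of_real s * z)\<^sup>2"
proof -
  have "1 - (mob s z)\<^sup>2 = ((1 + of_real s * z)\<^sup>2 - (z + of_real s)\<^sup>2) / (1 + of_real s * z)\<^sup>2"
    using nz by (simp add: mob_def power_divide diff_divide_distrib)
  also have "(1 + of_real s * z)\<^sup>2 - (z + of_real s)\<^sup>2 = (1 - (of_real s)\<^sup>2) * (1 - z\<^sup>2)"
    by (simp add: power2_eq_square algebra_simps)
  finally show ?thesis .
qed

lemma om2_mob:
  assumes s: "\<bar>s\<bar> < 1" and z: "cmod z \<le> 1"
  shows "om2 (mob s z) = om2 z"
proof -
  have nz: "1 + of_real s * z \<noteq> 0" using mob_denom_nz[OF s z] .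
  define c where "c = (1 - s\<^sup>2) / (cmod (1 + of_real s * z))\<^sup>2"
  have s2: "1 - s\<^sup>2 \<noteq> 0" using s by (simp add: abs_square_eq_1)
  have c: "c \<noteq> 0" using s2 nz by (simp add: c_def)
  have c1: "1 - (cmod (mob s z))\<^sup>2 = c * (1 - (cmod z)\<^sup>2)"
    unfolding mob_norm[OF nz] c_def by (metis mult.commute times_divide_eq_right)
  have "cmod (1 - (mob s z)\<^sup>2) = \<bar>1 - s\<^sup>2\<bar> * cmod (1 - z\<^sup>2) / (cmod (1 + of_real s * z))\<^sup>2"
  proof -
    have e: "1 - (complex_of_real s)\<^sup>2 = complex_of_real (1 - s\<^sup>2)" by simp
    show ?thesis unfolding mob_one_minus_sq[OF nz] e
      by (simp only: norm_divide norm_mult norm_power norm_of_real)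
  qed
  also have "\<bar>1 - s\<^sup>2\<bar> = 1 - s\<^sup>2" using s by (simp add: abs_square_less_1 less_imp_le)
  finally have c2: "cmod (1 - (mob s z)\<^sup>2) = c * cmod (1 - z\<^sup>2)" by (simp add: c_def)
  have "om2 (mob s z) = (c * (1 - (cmod z)\<^sup>2))\<^sup>2 / (c * cmod (1 - z\<^sup>2))\<^sup>2"
    unfolding om2_cmod c1 c2 ..
  also have "\<dots> = (c\<^sup>2 * (1 - (cmod z)\<^sup>2)\<^sup>2) / (c\<^sup>2 * (cmod (1 - z\<^sup>2))\<^sup>2)"
    by (simp only: power_mult_distrib)
  also have "\<dots> = (1 - (cmod z)\<^sup>2)\<^sup>2 / (cmod (1 - z\<^sup>2))\<^sup>2"
    by (rule mult_divide_mult_cancel_left) (simp add: c)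
  finally show ?thesis by (simp only: om2_cmod)
qed

lemma tau_mob: "\<bar>s\<bar> < 1 \<Longrightarrow> cmod z \<le> 1 \<Longrightarrow> tau D (mob s z) = tau D z"
  by (simp add: tau_def om2_mob)

lemma g0_f0: "cmod z \<le> 1 \<Longrightarrow> g0 D (f0 D z) = z"
proof -
  assume z: "cmod z \<le> 1"
  have t: "tau D (f0 D z) = tau D z" unfolding f0_def by (rule tau_mob[OF tau_abs z])
  show ?thesis unfolding g0_def t unfolding f0_def
    by (rule mob_inv[OF tau_abs mob_denom_nz[OF tau_abs z]])
qed

lemma f0_g0: "cmod z \<le> 1 \<Longrightarrow> f0 D (g0 D z) = z"
proof -
  assume z: "cmod z \<le> 1"
  have a: "\<bar>- tau D z\<bar> < 1" using tau_abs by simp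
  have t: "tau D (g0 D z) = tau D z" unfolding g0_def by (rule tau_mob[OF a z])
  show ?thesis unfolding f0_def t unfolding g0_def
    using mob_inv[OF a mob_denom_nz[OF a z]] by simp
qed

lemma f0_cball: "cmod z \<le> 1 \<Longrightarrow> cmod (f0 D z) \<le> 1"
  unfolding f0_def by (rule mob_cball[OF tau_abs])
lemma g0_cball: "cmod z \<le> 1 \<Longrightarrow> cmod (g0 D z) \<le> 1"
  unfolding g0_def using mob_cball[of "- tau D z" z] tau_abs[of D z] by simp
lemma f0_ball: "cmod z < 1 \<Longrightarrow> cmod (f0 D z) < 1"
  unfolding f0_def by (rule mob_ball[OF tau_abs])
lemma g0_ball: "cmod z < 1 \<Longrightarrow> cmod (g0 D z) < 1"
  unfolding g0_def using mob_ball[of "- tau D z" z] tau_abs[of D z] by simp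
lemma f0_sphere: "cmod z = 1 \<Longrightarrow> f0 D z = z"
  by (simp add: f0_def tau_sphere mob_def)
lemma f0_0: "f0 D 0 = of_real (tanh (D / 2))"
  by (simp add: f0_def tau_0 mob_def)

lemma isCont_tau: "NN z \<noteq> 0 \<Longrightarrow> isCont (tau D) z"
  unfolding tau_def[abs_def] om2_def[abs_def] NN_def PP_def
  by (intro continuous_intros) (auto simp: NN_def PP_def)

lemma mob_minus_fix:
  assumes "z0\<^sup>2 = 1" "1 + of_real s * z \<noteq> 0"
  shows "mob s z - z0 = (1 - z0 * of_real s) * (z - z0) / (1 + of_real s * z)"
  using assms by (simp add: mob_def field_simps power2_eq_square)

lemma cont_mob_sigma:
  fixes \<sigma> :: "complex \<Rightarrow> real"
  assumes T: "T < 1" and sb: "\<And>z. cmod z \<le> 1 \<Longrightarrow> \<bar>\<sigma> z\<bar> \<le> T"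
    and sc: "\<And>z. NN z \<noteq> 0 \<Longrightarrow> isCont \<sigma> z"
  shows "continuous_on (cball 0 1) (\<lambda>z. mob (\<sigma> z) z)"
  unfolding continuous_on_eq_continuous_within
proof
  fix z0 :: complex assume z0: "z0 \<in> cball 0 1"
  show "continuous (at z0 within cball 0 1) (\<lambda>z. mob (\<sigma> z) z)"
  proof (cases "NN z0 = 0")
    case False
    have "1 + of_real (\<sigma> z0) * z0 \<noteq> 0"
      using mob_denom_nz[of "\<sigma> z0" z0] sb[of z0] z0 T by auto
    then have "isCont (\<lambda>z. mob (\<sigma> z) z) z0"
      unfolding mob_def using sc[OF False] by (intro continuous_intros) auto
    then show ?thesis using continuous_at_imp_continuous_within by blast
  next
    case True
    then have sq: "z0\<^sup>2 = 1" using N2_eq[of z0] by simp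
    have "(cmod z0)\<^sup>2 = 1" using sq by (metis norm_one norm_power)
    then have nz0: "cmod z0 = 1" by (simp add: abs_square_eq_1)
    have fix0: "mob (\<sigma> z0) z0 = z0"
      using mob_minus_fix[OF sq, of "\<sigma> z0" z0] mob_denom_nz[of "\<sigma> z0" z0] sb[of z0] z0 T by auto
    have T0: "0 \<le> T" using sb[of 0] by auto
    have bnd: "cmod (mob (\<sigma> z) z - z0) \<le> 2 / (1 - T) * cmod (z - z0)" if z: "cmod z \<le> 1" for z
    proof -
      have s: "\<bar>\<sigma> z\<bar> \<le> T" using sb[OF z] .
      have den: "1 - T \<le> cmod (1 + of_real (\<sigma> z) * z)" by (rule mob_denom_ge[OF s z])
      have nz: "1 + of_real (\<sigma> z) * z \<noteq> 0" using den T by auto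
      have num: "cmod (1 - z0 * of_real (\<sigma> z)) \<le> 2"
      proof -
        have "cmod (1 - z0 * of_real (\<sigma> z)) \<le> 1 + cmod (z0 * of_real (\<sigma> z))" using norm_triangle_ineq4[of 1 "z0 * of_real (\<sigma> z)"] by simp
        also have "\<dots> \<le> 2" using nz0 s T by (simp add: norm_mult)
        finally show ?thesis .
      qed
      have "cmod (mob (\<sigma> z) z - z0) = cmod (1 - z0 * of_real (\<sigma> z)) * cmod (z - z0) / cmod (1 + of_real (\<sigma> z) * z)"
        unfolding mob_minus_fix[OF sq nz] by (simp add: norm_divide norm_mult)
      also have "\<dots> \<le> 2 * cmod (z - z0) / (1 - T)"
      proof -
        have A: "0 \<le> 2 * cmod (z - z0)" by simp
        have B: "cmod (1 - z0 * of_real (\<sigma> z)) * cmod (z - z0) \<le> 2 * cmod (z - z0)"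
          by (rule mult_right_mono[OF num norm_ge_zero])
        have C: "0 < 1 - T" using T by simp
        show ?thesis by (rule frac_le[OF A B C den])
      qed
      finally show ?thesis by simp
    qed
    show ?thesis
      unfolding continuous_within_eps_delta
    proof (intro allI impI)
      fix e :: real assume e: "e > 0"
      show "\<exists>d>0. \<forall>x'\<in>cball 0 1. dist x' z0 < d \<longrightarrow> dist (mob (\<sigma> x') x') (mob (\<sigma> z0) z0) < e"
      proof (intro exI[of _ "e * (1 - T) / 2"] conjI ballI impI)
        show "e * (1 - T) / 2 > 0" using e T by simp
        fix z assume z: "z \<in> cball 0 1" and d: "dist z z0 < e * (1 - T) / 2"
        have "cmod (mob (\<sigma> z) z - z0) \<le> 2 / (1 - T) * cmod (z - z0)" using bnd z by simp
        also have "\<dots> < 2 / (1 - T) * (e * (1 - T) / 2)"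
          using d T by (intro mult_strict_left_mono) (simp_all add: dist_norm)
        also have "\<dots> = e" using T by (simp add: field_simps)
        finally show "dist (mob (\<sigma> z) z) (mob (\<sigma> z0) z0) < e" by (simp add: fix0 dist_norm)
      qed
    qed
  qed
qed

lemma tau_abs_le: "D \<ge> 0 \<Longrightarrow> cmod z \<le> 1 \<Longrightarrow> \<bar>tau D z\<bar> \<le> tanh (D / 2)"
  using tau_bounds[of D z] by linarith

lemma f0_cont: "D \<ge> 0 \<Longrightarrow> continuous_on (cball 0 1) (f0 D)"
  unfolding f0_def[abs_def]
  by (rule cont_mob_sigma[of "tanh (D/2)"]) (simp_all add: tanh_real_lt_1 isCont_tau tau_abs_le)

lemma g0_cont: "D \<ge> 0 \<Longrightarrow> continuous_on (cball 0 1) (g0 D)"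
proof -
  assume D: "D \<ge> 0"
  have "continuous_on (cball 0 1) (\<lambda>z. mob ((\<lambda>z. - tau D z) z) z)"
  proof (rule cont_mob_sigma[of "tanh (D/2)"])
    show "tanh (D / 2) < 1" by (rule tanh_real_lt_1)
    show "\<bar>- tau D z\<bar> \<le> tanh (D / 2)" if "cmod z \<le> 1" for z using tau_abs_le[OF D that] by simp
    show "isCont (\<lambda>z. - tau D z) z" if "NN z \<noteq> 0" for z
      using isCont_tau[OF that, of D] by (rule isCont_minus)
  qed
  then show ?thesis unfolding g0_def[abs_def] by simp
qed

lemma f0_homeo: "D \<ge> 0 \<Longrightarrow> homeomorphism (cball 0 1) (cball 0 1) (f0 D) (g0 D)"
  by (rule homeomorphismI) (simp_all add: f0_cont g0_cont image_subset_iff f0_cball g0_cball g0_f0 f0_g0)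

lemma alg2:
  fixes h hc r rc z t Dc :: complex
  assumes E: "1 + t * z \<noteq> 0"
  shows "((h + (1 - t\<^sup>2) * Dc * ((r * h + rc * hc) / 2)) * (1 + t * z) - (z + t) * ((1 - t\<^sup>2) * Dc * ((r * h + rc * hc) / 2) * z + t * h)) / ((1 + t * z) * (1 + t * z))
   = (1 - t\<^sup>2) * (1 + Dc * ((1 - z\<^sup>2) * r / 2)) / (1 + t * z)\<^sup>2 * h + (1 - t\<^sup>2) * Dc * ((1 - z\<^sup>2) * rc / 2) / (1 + t * z)\<^sup>2 * hc"
proof -
  have "((h + (1 - t\<^sup>2) * Dc * ((r * h + rc * hc) / 2)) * (1 + t * z) - (z + t) * ((1 - t\<^sup>2) * Dc * ((r * h + rc * hc) / 2) * z + t * h))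
       = (1 - t\<^sup>2) * (1 + Dc * ((1 - z\<^sup>2) * r / 2)) * h + (1 - t\<^sup>2) * Dc * ((1 - z\<^sup>2) * rc / 2) * hc"
    by (simp add: field_simps power2_eq_square)
  then show ?thesis using E by (simp add: power2_eq_square add_divide_distrib)
qed

lemma bel_core:
  fixes s D :: real
  assumes "\<bar>s\<bar> \<le> D / 2"
  shows "\<bar>s\<bar> \<le> (2 + D\<^sup>2) / (4 + D\<^sup>2) * cmod (1 + \<i> * of_real s)"
proof -
  have c: "cmod (1 + \<i> * of_real s) = sqrt (1 + s\<^sup>2)" by (simp add: cmod_def)
  have u: "4 * s\<^sup>2 \<le> D\<^sup>2"
  proof -
    have "0 \<le> D" using assms by linarith
    then have "\<bar>2 * s\<bar> \<le> \<bar>D\<bar>" using assms by simp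
    then have "(2 * s)\<^sup>2 \<le> D\<^sup>2" by (simp add: abs_le_square_iff)
    then show ?thesis by (simp add: power_mult_distrib)
  qed
  have "s\<^sup>2 * (12 + 4 * D\<^sup>2) \<le> (2 + D\<^sup>2)\<^sup>2"
  proof -
    have "s\<^sup>2 * (12 + 4 * D\<^sup>2) = (4 * s\<^sup>2) * (3 + D\<^sup>2)" by (simp add: algebra_simps)
    also have "\<dots> \<le> D\<^sup>2 * (3 + D\<^sup>2)" by (rule mult_right_mono[OF u]) simp
    also have "\<dots> \<le> (2 + D\<^sup>2)\<^sup>2" by (simp add: power2_eq_square algebra_simps)
    finally show ?thesis .
  qed
  then have "s\<^sup>2 * (4 + D\<^sup>2)\<^sup>2 \<le> (2 + D\<^sup>2)\<^sup>2 * (1 + s\<^sup>2)"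
    by (simp add: power2_eq_square algebra_simps)
  moreover have pos: "(4 + D\<^sup>2)\<^sup>2 > 0"
  proof -
    have "4 + D\<^sup>2 > 0" by (simp add: add_pos_nonneg)
    then show ?thesis by simp
  qed
  moreover have "((2 + D\<^sup>2) / (4 + D\<^sup>2))\<^sup>2 * (1 + s\<^sup>2) = (2 + D\<^sup>2)\<^sup>2 * (1 + s\<^sup>2) / (4 + D\<^sup>2)\<^sup>2"
    by (simp add: power_divide)
  ultimately have "s\<^sup>2 \<le> ((2 + D\<^sup>2) / (4 + D\<^sup>2))\<^sup>2 * (1 + s\<^sup>2)"
    by (simp add: pos_le_divide_eq)
  then have "sqrt (s\<^sup>2) \<le> sqrt (((2 + D\<^sup>2) / (4 + D\<^sup>2))\<^sup>2 * (1 + s\<^sup>2))"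
    by (rule real_sqrt_le_mono)
  also have "\<dots> = (2 + D\<^sup>2) / (4 + D\<^sup>2) * sqrt (1 + s\<^sup>2)"
    by (simp add: real_sqrt_mult add_pos_nonneg)
  finally show ?thesis using c by simp
qed
lemma PP_deriv: "(PP has_derivative (\<lambda>h. - 2 * Re z * Re h - 2 * Im z * Im h)) (at z)"
  unfolding PP_def[abs_def]
  by (rule derivative_eq_intros refl | simp)+ (simp add: fun_eq_iff algebra_simps)

lemma NN_deriv: "(NN has_derivative (\<lambda>h. 2 * PP z * (- 2 * Re z * Re h - 2 * Im z * Im h) + 8 * Im z * Im h)) (at z)"
  unfolding NN_def[abs_def]
  by (rule derivative_eq_intros PP_deriv refl | simp)+ (simp add: fun_eq_iff algebra_simps)

lemma om2_deriv:
  assumes n: "NN z \<noteq> 0"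
  shows "(om2 has_derivative (\<lambda>h. Re (rho2 z * h))) (at z)"
  unfolding om2_def[abs_def]
  apply (rule derivative_eq_intros PP_deriv NN_deriv refl | simp add: n)+
  apply (rule ext)
  apply (simp add: rho2_def)
  apply (simp add: field_simps n)
  apply (simp add: NN_def power2_eq_square algebra_simps)
  done


lemma tau_deriv:
  assumes n: "NN z \<noteq> 0"
  shows "(tau D has_derivative (\<lambda>h. (1 - (tau D z)\<^sup>2) * (D * Re (rho2 z * h) / 2))) (at z)"
proof -
  have d1: "((\<lambda>z. D * om2 z / 2) has_derivative (\<lambda>h. D * Re (rho2 z * h) / 2)) (at z)"
    by (auto intro!: derivative_eq_intros om2_deriv[OF n])
  have d2: "((\<lambda>x. tanh x) has_field_derivative (1 - (tanh w)\<^sup>2) * 1) (at w)" for w :: real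
    by (rule has_field_derivative_tanh) (auto intro: DERIV_ident)
  have d3: "(tanh has_derivative (\<lambda>h. (1 - (tanh (D * om2 z / 2))\<^sup>2) * h)) (at (D * om2 z / 2))"
    using d2[of "D * om2 z / 2"] by (simp add: has_field_derivative_def)
  show ?thesis
    using has_derivative_compose[OF d1 d3] by (simp add: tau_def[abs_def])
qed

definition al0 :: "real \<Rightarrow> complex \<Rightarrow> complex" where
  "al0 D z = (1 - (of_real (tau D z))\<^sup>2) * (1 + of_real (D/2) * ((1 - z\<^sup>2) * rho2 z / 2)) / (1 + of_real (tau D z) * z)\<^sup>2"
definition be0 :: "real \<Rightarrow> complex \<Rightarrow> complex" where
  "be0 D z = (1 - (of_real (tau D z))\<^sup>2) * of_real (D/2) * ((1 - z\<^sup>2) * cnj (rho2 z) / 2) / (1 + of_real (tau D z) * z)\<^sup>2"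

lemma of_real_Re_cnj: "complex_of_real (Re w) = (w + cnj w) / 2"
  by (simp add: complex_eq_iff)

lemma f0_deriv:
  assumes n: "NN z \<noteq> 0" and E: "1 + of_real (tau D z) * z \<noteq> 0"
  shows "(f0 D has_derivative (\<lambda>h. al0 D z * h + be0 D z * cnj h)) (at z)"
proof -
  define t where "t = complex_of_real (tau D z)"
  define Dt where "Dt h = (1 - (tau D z)\<^sup>2) * (D * Re (rho2 z * h) / 2)" for h
  have td: "(tau D has_derivative Dt) (at z)" unfolding Dt_def by (rule tau_deriv[OF n])
  have tdc: "((\<lambda>z. complex_of_real (tau D z)) has_derivative (\<lambda>h. complex_of_real (Dt h))) (at z)"
    by (rule has_derivative_of_real[OF td])
  have num: "((\<lambda>z. z + complex_of_real (tau D z)) has_derivative (\<lambda>h. h + complex_of_real (Dt h))) (at z)"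
    by (rule has_derivative_add[OF has_derivative_ident tdc])
  have den: "((\<lambda>z. 1 + complex_of_real (tau D z) * z) has_derivative
              (\<lambda>h. 0 + (complex_of_real (tau D z) * h + complex_of_real (Dt h) * z))) (at z)"
    by (rule has_derivative_add[OF has_derivative_const has_derivative_mult[OF tdc has_derivative_ident]])
  have q: "((\<lambda>z. (z + complex_of_real (tau D z)) / (1 + complex_of_real (tau D z) * z)) has_derivative
     (\<lambda>h. ((h + complex_of_real (Dt h)) * (1 + t * z) - (z + t) * (0 + (t * h + complex_of_real (Dt h) * z))) / ((1 + t * z) * (1 + t * z)))) (at z)"
    unfolding t_def by (rule has_derivative_divide'[OF num den E])
  have eqD: "complex_of_real (Dt h) = (1 - t\<^sup>2) * complex_of_real (D/2) * ((rho2 z * h + cnj (rho2 z) * cnj h) / 2)" for h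
    unfolding Dt_def t_def of_real_mult of_real_divide of_real_diff of_real_power of_real_Re_cnj
    by (simp add: field_simps)
  have "(\<lambda>h. ((h + complex_of_real (Dt h)) * (1 + t * z) - (z + t) * (0 + (t * h + complex_of_real (Dt h) * z))) / ((1 + t * z) * (1 + t * z)))
        = (\<lambda>h. al0 D z * h + be0 D z * cnj h)"
  proof
    fix h
    have E': "1 + t * z \<noteq> 0" using E by (simp add: t_def)
    show "((h + complex_of_real (Dt h)) * (1 + t * z) - (z + t) * (0 + (t * h + complex_of_real (Dt h) * z))) / ((1 + t * z) * (1 + t * z))
        = al0 D z * h + be0 D z * cnj h"
      unfolding eqD al0_def be0_def t_def[symmetric]
      using alg2[OF E', of h "complex_of_real (D/2)" "rho2 z" "cnj (rho2 z)" "cnj h"]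
      by (simp add: algebra_simps)
  qed
  with q show ?thesis unfolding f0_def[abs_def] mob_def by simp
qed

lemma isCont_PP: "isCont PP z"
  unfolding PP_def[abs_def] by (intro continuous_intros isCont_Re[OF continuous_ident] isCont_Im[OF continuous_ident])
lemma isCont_NN: "isCont NN z"
  unfolding NN_def[abs_def] by (intro continuous_intros isCont_PP isCont_Im[OF continuous_ident])
lemma isCont_rho2: "NN z \<noteq> 0 \<Longrightarrow> isCont rho2 z"
  unfolding rho2_def[abs_def] by (intro continuous_intros isCont_PP isCont_NN isCont_Re[OF continuous_ident] isCont_Im[OF continuous_ident]) auto

lemma E_nz: "cmod z \<le> 1 \<Longrightarrow> 1 + of_real (tau D z) * z \<noteq> 0"
  by (rule mob_denom_nz[OF tau_abs])

lemma isCont_al0: "cmod z < 1 \<Longrightarrow> isCont (al0 D) z"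
proof -
  assume z: "cmod z < 1"
  have n: "NN z \<noteq> 0" using NN_pos[OF z] by simp
  have E: "(1 + of_real (tau D z) * z)\<^sup>2 \<noteq> 0" using E_nz[of z D] z by simp
  show ?thesis unfolding al0_def[abs_def]
    by (intro continuous_intros isCont_tau[OF n] isCont_rho2[OF n] E) auto
qed

lemma isCont_be0: "cmod z < 1 \<Longrightarrow> isCont (be0 D) z"
proof -
  assume z: "cmod z < 1"
  have n: "NN z \<noteq> 0" using NN_pos[OF z] by simp
  have E: "(1 + of_real (tau D z) * z)\<^sup>2 \<noteq> 0" using E_nz[of z D] z by simp
  show ?thesis unfolding be0_def[abs_def]
    by (intro continuous_intros isCont_tau[OF n] isCont_rho2[OF n] E) auto
qed

lemma w_eq:
  assumes n: "NN z \<noteq> 0"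
  shows "(1 - z\<^sup>2) * rho2 z / 2 = \<i> * of_real (4 * Im z * PP z / NN z)"
proof -
  have nn: "NN z = (PP z)\<^sup>2 + 4 * (Im z)\<^sup>2" by (simp add: NN_def)
  have pp: "(Re z)\<^sup>2 = 1 - PP z - (Im z)\<^sup>2" by (simp add: PP_def)
  show ?thesis
  proof (rule complex_eqI)
    show "Re ((1 - z\<^sup>2) * rho2 z / 2) = Re (\<i> * complex_of_real (4 * Im z * PP z / NN z))"
      by (simp add: rho2_def power2_eq_square field_simps n) (simp add: PP_def power2_eq_square algebra_simps)
    have "Im ((1 - z\<^sup>2) * rho2 z / 2) = 4 * Im z * PP z * ((PP z + 2 * (Im z)\<^sup>2)\<^sup>2 + 4 * (Re z)\<^sup>2 * (Im z)\<^sup>2) / (NN z)\<^sup>2"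
      by (simp add: rho2_def power2_eq_square field_simps n) (simp add: PP_def power2_eq_square algebra_simps)
    also have "(PP z + 2 * (Im z)\<^sup>2)\<^sup>2 + 4 * (Re z)\<^sup>2 * (Im z)\<^sup>2 = NN z"
      unfolding pp nn by (simp add: power2_eq_square algebra_simps)
    also have "4 * Im z * PP z * NN z / (NN z)\<^sup>2 = 4 * Im z * PP z / NN z"
      using n by (simp add: power2_eq_square)
    finally show "Im ((1 - z\<^sup>2) * rho2 z / 2) = Im (\<i> * complex_of_real (4 * Im z * PP z / NN z))"
      by simp
  qed
qed

lemma tt_bound:
  assumes z: "cmod z < 1"
  shows "\<bar>4 * Im z * PP z / NN z\<bar> \<le> 1"
proof -
  have P: "PP z > 0" using PP_pos[OF z] .
  have N: "NN z > 0" using NN_pos[OF z] .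
  have "(PP z - 2 * \<bar>Im z\<bar>)\<^sup>2 \<ge> 0" by simp
  then have "4 * \<bar>Im z\<bar> * PP z \<le> NN z"
    by (simp add: NN_def power2_eq_square algebra_simps)
  then have "\<bar>4 * Im z * PP z\<bar> \<le> NN z" using P by (simp add: abs_mult)
  then show ?thesis using N by (simp add: abs_div divide_le_eq_1)
qed

lemma f0_beltrami:
  assumes z: "cmod z < 1" and D: "D \<ge> 0"
  shows "cmod (be0 D z) \<le> ((3 + D\<^sup>2) - 1) / ((3 + D\<^sup>2) + 1) * cmod (al0 D z)"
proof -
  have n: "NN z \<noteq> 0" using NN_pos[OF z] by simp
  define tt where "tt = 4 * Im z * PP z / NN z"
  define A where "A = (1 - (complex_of_real (tau D z))\<^sup>2) / (1 + complex_of_real (tau D z) * z)\<^sup>2"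
  have w: "(1 - z\<^sup>2) * rho2 z / 2 = \<i> * of_real tt" unfolding tt_def by (rule w_eq[OF n])
  have wc: "cmod ((1 - z\<^sup>2) * cnj (rho2 z) / 2) = \<bar>tt\<bar>"
  proof -
    have "cmod ((1 - z\<^sup>2) * cnj (rho2 z) / 2) = cmod ((1 - z\<^sup>2) * rho2 z / 2)"
      by (simp add: norm_mult norm_divide)
    then show ?thesis unfolding w by (simp add: norm_mult)
  qed
  have al: "al0 D z = A * (1 + \<i> * of_real (D / 2 * tt))"
    unfolding al0_def A_def w by (simp add: algebra_simps)
  have be: "cmod (be0 D z) = cmod A * \<bar>D / 2 * tt\<bar>"
  proof -
    have eq: "be0 D z = A * (of_real (D/2) * ((1 - z\<^sup>2) * cnj (rho2 z) / 2))"
      unfolding be0_def A_def by (simp add: field_simps)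
    have "cmod (be0 D z) = cmod A * (cmod (complex_of_real (D/2)) * cmod ((1 - z\<^sup>2) * cnj (rho2 z) / 2))"
      unfolding eq by (simp only: norm_mult)
    then show ?thesis using D unfolding wc by (simp add: abs_mult)
  qed
  have s: "\<bar>D / 2 * tt\<bar> \<le> D / 2"
  proof -
    have t1: "\<bar>tt\<bar> \<le> 1" using tt_bound[OF z] unfolding tt_def .
    have "D * \<bar>tt\<bar> \<le> D" by (rule mult_right_le_one_le[OF D abs_ge_zero t1])
    then show ?thesis using D by (simp add: abs_mult)
  qed
  have core: "\<bar>D / 2 * tt\<bar> \<le> (2 + D\<^sup>2) / (4 + D\<^sup>2) * cmod (1 + \<i> * of_real (D / 2 * tt))"
    by (rule bel_core[OF s])
  have "cmod (be0 D z) \<le> cmod A * ((2 + D\<^sup>2) / (4 + D\<^sup>2) * cmod (1 + \<i> * of_real (D / 2 * tt)))"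
    unfolding be by (rule mult_left_mono[OF core norm_ge_zero])
  also have "\<dots> = (2 + D\<^sup>2) / (4 + D\<^sup>2) * cmod (al0 D z)"
    unfolding al by (simp add: norm_mult)
  also have "(2 + D\<^sup>2) / (4 + D\<^sup>2) = ((3 + D\<^sup>2) - 1) / ((3 + D\<^sup>2) + 1)"
    by simp
  finally show ?thesis .
qed

definition Aut :: "complex \<Rightarrow> complex \<Rightarrow> complex \<Rightarrow> complex" where
  "Aut x l z = l * (z - x) / (1 - cnj x * z)"

definition aut' :: "complex \<Rightarrow> complex \<Rightarrow> complex \<Rightarrow> complex" where
  "aut' x l z = l * (1 - cnj x * x) / (1 - cnj x * z)\<^sup>2"

lemma aut_denom:
  assumes "cmod x < 1" "cmod z \<le> 1"
  shows "1 - cnj x * z \<noteq> 0"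
proof
  assume "1 - cnj x * z = 0"
  then have "cnj x * z = 1" by simp
  then have "cmod x * cmod z = 1" by (metis complex_mod_cnj norm_mult norm_one)
  moreover have "cmod x * cmod z \<le> cmod x" using assms by (simp add: mult_left_le_one_le mult.commute mult_right_le_one_le)
  ultimately show False using assms by linarith
qed

lemma aut_key:
  "(cmod (1 - cnj x * z))\<^sup>2 - (cmod (z - x))\<^sup>2 = (1 - (cmod x)\<^sup>2) * (1 - (cmod z)\<^sup>2)"
  unfolding cmod_power2 by (simp add: power2_eq_square algebra_simps)

lemma aut_norm:
  assumes l: "cmod l = 1" and nz: "1 - cnj x * z \<noteq> 0"
  shows "1 - (cmod (Aut x l z))\<^sup>2 = (1 - (cmod x)\<^sup>2) * (1 - (cmod z)\<^sup>2) / (cmod (1 - cnj x * z))\<^sup>2"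
proof -
  have "(cmod (Aut x l z))\<^sup>2 = (cmod (z - x))\<^sup>2 / (cmod (1 - cnj x * z))\<^sup>2"
    using l by (simp add: Aut_def norm_divide norm_mult power_divide)
  moreover have "(cmod (1 - cnj x * z))\<^sup>2 \<noteq> 0" using nz by simp
  ultimately have "1 - (cmod (Aut x l z))\<^sup>2 = ((cmod (1 - cnj x * z))\<^sup>2 - (cmod (z - x))\<^sup>2) / (cmod (1 - cnj x * z))\<^sup>2"
    by (simp add: diff_divide_distrib)
  then show ?thesis by (simp add: aut_key)
qed

lemma aut_cball:
  assumes l: "cmod l = 1" and x: "cmod x < 1" and z: "cmod z \<le> 1"
  shows "cmod (Aut x l z) \<le> 1"
proof -
  have nz: "1 - cnj x * z \<noteq> 0" by (rule aut_denom[OF x z])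
  have "0 \<le> (1 - (cmod x)\<^sup>2) * (1 - (cmod z)\<^sup>2) / (cmod (1 - cnj x * z))\<^sup>2"
    using x z by (intro divide_nonneg_nonneg mult_nonneg_nonneg) (auto simp: abs_square_le_1 abs_square_less_1 less_imp_le)
  then have "(cmod (Aut x l z))\<^sup>2 \<le> 1" using aut_norm[OF l nz] by linarith
  then show ?thesis by (simp add: abs_square_le_1)
qed

lemma aut_ball:
  assumes l: "cmod l = 1" and x: "cmod x < 1" and z: "cmod z < 1"
  shows "cmod (Aut x l z) < 1"
proof -
  have nz: "1 - cnj x * z \<noteq> 0" using aut_denom[OF x] z by simp
  have "0 < (1 - (cmod x)\<^sup>2) * (1 - (cmod z)\<^sup>2) / (cmod (1 - cnj x * z))\<^sup>2"
    using x z nz by (intro divide_pos_pos mult_pos_pos) (auto simp: abs_square_less_1)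
  then have "(cmod (Aut x l z))\<^sup>2 < 1" using aut_norm[OF l nz] by linarith
  then show ?thesis by (simp add: abs_square_less_1)
qed

lemma aut_sphere:
  assumes l: "cmod l = 1" and x: "cmod x < 1" and z: "cmod z = 1"
  shows "cmod (Aut x l z) = 1"
proof -
  have nz: "1 - cnj x * z \<noteq> 0" using aut_denom[OF x] z by simp
  have "(cmod (Aut x l z))\<^sup>2 = 1" using aut_norm[OF l nz] z by simp
  then show ?thesis by (simp add: abs_square_eq_1)
qed

lemma cnj_mult_self_norm: "cmod l = 1 \<Longrightarrow> cnj l * l = 1"
  using complex_norm_square[of l] by (simp add: mult.commute)

lemma aut_inv:
  assumes l: "cmod l = 1" and x: "cmod x < 1" and nz: "1 - cnj x * z \<noteq> 0"
  shows "Aut (-(l * x)) (cnj l) (Aut x l z) = z"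
proof -
  have ll: "cnj l * l = 1" by (rule cnj_mult_self_norm[OF l])
  have xx: "1 - cnj x * x \<noteq> 0"
  proof
    assume "1 - cnj x * x = 0"
    then have "cmod (cnj x * x) = 1" by (metis eq_iff_diff_eq_0 norm_one)
    then have "cmod x * cmod x = 1" by (simp add: norm_mult)
    then show False using x by (metis abs_square_eq_1 abs_norm_cancel less_irrefl power2_eq_square)
  qed
  define w where "w = Aut x l z"
  have e1: "w + l * x = l * z * (1 - cnj x * x) / (1 - cnj x * z)"
    unfolding w_def Aut_def using nz by (simp add: field_simps)
  have e2: "1 - cnj (- (l * x)) * w = (1 - cnj x * x) / (1 - cnj x * z)"
  proof -
    have "1 - cnj (- (l * x)) * w = (1 - cnj x * z + (cnj l * l) * (cnj x * (z - x))) / (1 - cnj x * z)"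
      unfolding w_def Aut_def using nz by (simp add: field_simps)
    also have "\<dots> = (1 - cnj x * x) / (1 - cnj x * z)"
      unfolding ll by (simp add: algebra_simps)
    finally show ?thesis .
  qed
  have "Aut (-(l * x)) (cnj l) w = cnj l * (w + l * x) / (1 - cnj (- (l * x)) * w)"
    unfolding Aut_def by simp
  also have "\<dots> = cnj l * (l * z * (1 - cnj x * x) / (1 - cnj x * z)) / ((1 - cnj x * x) / (1 - cnj x * z))"
    unfolding e1 e2 ..
  also have "\<dots> = (cnj l * l) * z"
  proof -
    have AB: "(1 - cnj x * x) / (1 - cnj x * z) \<noteq> 0" using nz xx by simp
    have "cnj l * (l * z * (1 - cnj x * x) / (1 - cnj x * z)) = (cnj l * l * z) * ((1 - cnj x * x) / (1 - cnj x * z))"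
      by (simp add: algebra_simps)
    then show ?thesis using AB by simp
  qed
  also have "\<dots> = z" by (simp add: ll)
  finally show ?thesis unfolding w_def .
qed

lemma aut_inv2:
  assumes l: "cmod l = 1" and x: "cmod x < 1" and nz: "1 + cnj l * cnj x * z \<noteq> 0"
  shows "Aut x l (Aut (-(l * x)) (cnj l) z) = z"
proof -
  have l': "cmod (cnj l) = 1" using l by simp
  have x': "cmod (-(l * x)) < 1" using l x by (simp add: norm_mult)
  have nz': "1 - cnj (-(l * x)) * z \<noteq> 0" using nz by (simp add: algebra_simps)
  have e: "-(cnj l * -(l * x)) = x"
  proof -
    have "-(cnj l * -(l * x)) = (cnj l * l) * x" by (simp add: algebra_simps)
    also have "\<dots> = x" using cnj_mult_self_norm[OF l] by simp
    finally show ?thesis .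
  qed
  show ?thesis using aut_inv[OF l' x' nz'] unfolding e complex_cnj_cnj .
qed

lemma aut_cont: "cmod x < 1 \<Longrightarrow> continuous_on (cball 0 1) (Aut x l)"
  unfolding Aut_def[abs_def]
  by (intro continuous_intros) (auto dest: aut_denom)

lemma aut_homeo:
  assumes l: "cmod l = 1" and x: "cmod x < 1"
  shows "homeomorphism (cball 0 1) (cball 0 1) (Aut x l) (Aut (-(l * x)) (cnj l))"
proof (rule homeomorphismI)
  have l': "cmod (cnj l) = 1" using l by simp
  have x': "cmod (-(l * x)) < 1" using l x by (simp add: norm_mult)
  show "continuous_on (cball 0 1) (Aut x l)" by (rule aut_cont[OF x])
  show "continuous_on (cball 0 1) (Aut (-(l * x)) (cnj l))" by (rule aut_cont[OF x'])
  show "Aut x l ` cball 0 1 \<subseteq> cball 0 1" using aut_cball[OF l x] by auto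
  show "Aut (-(l * x)) (cnj l) ` cball 0 1 \<subseteq> cball 0 1" using aut_cball[OF l' x'] by auto
  show "Aut (-(l * x)) (cnj l) (Aut x l z) = z" if "z \<in> cball 0 1" for z
    using aut_inv[OF l x aut_denom[OF x]] that by simp
  show "Aut x l (Aut (-(l * x)) (cnj l) z) = z" if "z \<in> cball 0 1" for z
  proof (rule aut_inv2[OF l x])
    have "1 - cnj (-(l * x)) * z \<noteq> 0" using aut_denom[OF x'] that by simp
    then show "1 + cnj l * cnj x * z \<noteq> 0" by (simp add: algebra_simps)
  qed
qed

lemma aut_deriv:
  assumes nz: "1 - cnj x * z \<noteq> 0"
  shows "(Aut x l has_derivative (\<lambda>h. aut' x l z * h)) (at z)"
proof -
  have d: "((\<lambda>z. l * (z - x) / (1 - cnj x * z)) has_field_derivative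
      (l * (1 - cnj x * z) + l * (z - x) * cnj x) / ((1 - cnj x * z) * (1 - cnj x * z))) (at z)"
    using nz by (auto intro!: derivative_eq_intros simp: algebra_simps)
  have "l * (1 - cnj x * z) + l * (z - x) * cnj x = l * (1 - cnj x * x)" by (simp add: algebra_simps)
  then have "((\<lambda>z. l * (z - x) / (1 - cnj x * z)) has_field_derivative aut' x l z) (at z)"
    using d by (simp add: aut'_def power2_eq_square)
  then show ?thesis unfolding has_field_derivative_def Aut_def[abs_def] by simp
qed

lemma isCont_aut': "1 - cnj x * z \<noteq> 0 \<Longrightarrow> isCont (aut' x l) z"
  unfolding aut'_def[abs_def] by (intro continuous_intros) auto

lemma conj_homeo:
  assumes l: "cmod l = 1" and x: "cmod x < 1" and D: "D \<ge> 0"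
  shows "homeomorphism (cball 0 1) (cball 0 1)
           (\<lambda>z. Aut (-(l * x)) (cnj l) (f0 D (Aut x l z))) (\<lambda>z. Aut (-(l * x)) (cnj l) (g0 D (Aut x l z)))"
proof -
  have h1: "homeomorphism (cball 0 1) (cball 0 1) (Aut x l) (Aut (-(l * x)) (cnj l))"
    by (rule aut_homeo[OF l x])
  have h2: "homeomorphism (cball 0 1) (cball 0 1) (Aut (-(l * x)) (cnj l)) (Aut x l)"
    using h1 by (rule homeomorphism_symD)
  have "homeomorphism (cball 0 1) (cball 0 1) (Aut (-(l * x)) (cnj l) \<circ> (f0 D \<circ> Aut x l))
          ((Aut (-(l * x)) (cnj l) \<circ> g0 D) \<circ> Aut x l)"
    by (rule homeomorphism_compose[OF homeomorphism_compose[OF h1 f0_homeo[OF D]] h2])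
  then show ?thesis by (simp add: o_def)
qed

lemma conj_sphere:
  assumes l: "cmod l = 1" and x: "cmod x < 1" and z: "cmod z = 1"
  shows "Aut (-(l * x)) (cnj l) (f0 D (Aut x l z)) = z"
proof -
  have "cmod (Aut x l z) = 1" by (rule aut_sphere[OF l x z])
  then have "f0 D (Aut x l z) = Aut x l z" by (rule f0_sphere)
  moreover have "Aut (-(l * x)) (cnj l) (Aut x l z) = z"
    using aut_inv[OF l x aut_denom[OF x]] z by simp
  ultimately show ?thesis by simp
qed

lemma conj_qc:
  assumes l: "cmod l = 1" and x: "cmod x < 1" and D: "D \<ge> 0"
  shows "quasiconformal_on (3 + D\<^sup>2) (ball 0 1) (\<lambda>z. Aut (-(l * x)) (cnj l) (f0 D (Aut x l z)))"
proof -
  define A where "A = Aut x l"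
  define Ai where "Ai = Aut (-(l * x)) (cnj l)"
  define xi where "xi = -(l * x)"
  define li where "li = cnj l"
  have Ai_def': "Ai = Aut xi li" by (simp add: Ai_def xi_def li_def)
  have x': "cmod xi < 1" using l x by (simp add: xi_def norm_mult)
  define a where "a z = aut' xi li (f0 D (A z)) * al0 D (A z) * aut' x l z" for z
  define b where "b z = aut' xi li (f0 D (A z)) * be0 D (A z) * cnj (aut' x l z)" for z
  have H: "homeomorphism (cball 0 1) (cball 0 1) (\<lambda>z. Ai (f0 D (A z))) (\<lambda>z. Ai (g0 D (A z)))"
    unfolding A_def Ai_def by (rule conj_homeo[OF l x D])
  have Hb: "homeomorphism (ball 0 1) ((\<lambda>z. Ai (f0 D (A z))) ` ball 0 1) (\<lambda>z. Ai (f0 D (A z))) (\<lambda>z. Ai (g0 D (A z)))"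
    by (rule homeomorphism_of_subsets[OF H ball_subset_cball order_refl refl])
  have facts: "(A has_derivative (\<lambda>h. aut' x l z * h)) (at z)"
      "cmod (A z) < 1"
      "(f0 D has_derivative (\<lambda>h. al0 D (A z) * h + be0 D (A z) * cnj h)) (at (A z))"
      "cmod (f0 D (A z)) < 1"
      "(Ai has_derivative (\<lambda>h. aut' xi li (f0 D (A z)) * h)) (at (f0 D (A z)))"
      "1 - cnj x * z \<noteq> 0" "1 - cnj xi * f0 D (A z) \<noteq> 0"
    if z: "cmod z < 1" for z
  proof -
    show nz: "1 - cnj x * z \<noteq> 0" using aut_denom[OF x] z by simp
    show "(A has_derivative (\<lambda>h. aut' x l z * h)) (at z)" unfolding A_def by (rule aut_deriv[OF nz])
    show Az: "cmod (A z) < 1" unfolding A_def by (rule aut_ball[OF l x z])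
    have n: "NN (A z) \<noteq> 0" using NN_pos[OF Az] by simp
    have E: "1 + of_real (tau D (A z)) * A z \<noteq> 0" using E_nz[of "A z" D] Az by simp
    show "(f0 D has_derivative (\<lambda>h. al0 D (A z) * h + be0 D (A z) * cnj h)) (at (A z))"
      by (rule f0_deriv[OF n E])
    show w: "cmod (f0 D (A z)) < 1" by (rule f0_ball[OF Az])
    show nz': "1 - cnj xi * f0 D (A z) \<noteq> 0" using aut_denom[OF x'] w by simp
    show "(Ai has_derivative (\<lambda>h. aut' xi li (f0 D (A z)) * h)) (at (f0 D (A z)))"
      unfolding Ai_def' by (rule aut_deriv[OF nz'])
  qed
  show ?thesis
    unfolding A_def[symmetric] Ai_def[symmetric]
  proof (rule qc_C1[OF open_ball _ Hb, where a = a and b = b])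
    show "1 \<le> 3 + D\<^sup>2" by simp
    fix z assume "z \<in> ball (0::complex) 1"
    then have z: "cmod z < 1" by simp
    have d1: "((\<lambda>z. f0 D (A z)) has_derivative (\<lambda>h. al0 D (A z) * (aut' x l z * h) + be0 D (A z) * cnj (aut' x l z * h))) (at z)"
      by (rule has_derivative_compose[OF facts(1)[OF z] facts(3)[OF z]])
    have d2: "((\<lambda>z. Ai (f0 D (A z))) has_derivative (\<lambda>h. aut' xi li (f0 D (A z)) * (al0 D (A z) * (aut' x l z * h) + be0 D (A z) * cnj (aut' x l z * h)))) (at z)"
      by (rule has_derivative_compose[OF d1 facts(5)[OF z]])
    have "(\<lambda>h. aut' xi li (f0 D (A z)) * (al0 D (A z) * (aut' x l z * h) + be0 D (A z) * cnj (aut' x l z * h)))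
          = (\<lambda>h. a z * h + b z * cnj h)"
      by (simp add: a_def b_def fun_eq_iff algebra_simps)
    with d2 show "((\<lambda>z. Ai (f0 D (A z))) has_derivative (\<lambda>h. a z * h + b z * cnj h)) (at z)" by simp
    have "cmod (be0 D (A z)) \<le> ((3 + D\<^sup>2) - 1) / ((3 + D\<^sup>2) + 1) * cmod (al0 D (A z))"
      by (rule f0_beltrami[OF facts(2)[OF z] D])
    then have "cmod (aut' xi li (f0 D (A z))) * cmod (be0 D (A z)) * cmod (aut' x l z)
         \<le> cmod (aut' xi li (f0 D (A z))) * (((3 + D\<^sup>2) - 1) / ((3 + D\<^sup>2) + 1) * cmod (al0 D (A z))) * cmod (aut' x l z)"
      by (intro mult_right_mono mult_left_mono) auto
    then show "cmod (b z) \<le> (3 + D\<^sup>2 - 1) / (3 + D\<^sup>2 + 1) * cmod (a z)"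
      by (simp add: a_def b_def norm_mult algebra_simps)
  next
    have ca: "isCont a z" and cb: "isCont b z" if z: "cmod z < 1" for z
    proof -
      have cA: "isCont A z" using facts(1)[OF z] has_derivative_continuous by blast
      have cfA: "isCont (\<lambda>z. f0 D (A z)) z"
        using has_derivative_compose[OF facts(1)[OF z] facts(3)[OF z]] has_derivative_continuous by blast
      have c1: "isCont (\<lambda>z. aut' xi li (f0 D (A z))) z"
        by (rule isCont_o2[OF cfA isCont_aut'[OF facts(7)[OF z]]])
      have c2: "isCont (\<lambda>z. al0 D (A z)) z"
        by (rule isCont_o2[OF cA isCont_al0[OF facts(2)[OF z]]])
      have c3: "isCont (\<lambda>z. be0 D (A z)) z"
        by (rule isCont_o2[OF cA isCont_be0[OF facts(2)[OF z]]])
      have c4: "isCont (aut' x l) z" by (rule isCont_aut'[OF facts(6)[OF z]])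
      show "isCont a z" unfolding a_def[abs_def] by (intro continuous_intros c1 c2 c4)
      show "isCont b z" unfolding b_def[abs_def] by (intro continuous_intros c1 c3 c4)
    qed
    show "continuous_on (ball 0 1) a" by (rule continuous_at_imp_continuous_on) (use ca in auto)
    show "continuous_on (ball 0 1) b" by (rule continuous_at_imp_continuous_on) (use cb in auto)
  qed
qed

lemma one_minus_sq_ge:
  fixes r d :: real
  assumes "0 \<le> r" "r \<le> 1 - d" "0 \<le> d"
  shows "d \<le> 1 - r\<^sup>2"
proof -
  have "r * r \<le> r * 1" using assms by (intro mult_left_mono) auto
  then show ?thesis using assms by (simp add: power2_eq_square)
qed

lemma D_bound:
  fixes \<delta> t :: real
  assumes d: "0 < \<delta>" "\<delta> < 1/2" and t: "0 \<le> t" "t < 1"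
    and tt: "\<delta> * \<delta> / 4 \<le> 1 - t\<^sup>2"
  shows "3 + (ln ((1 + t) / (1 - t)))\<^sup>2 \<le> 48 * (ln \<delta>)\<^sup>2"
    and "0 \<le> ln ((1 + t) / (1 - t))"
proof -
  define u where "u = (1 + t) / (1 - t)"
  have u1: "1 \<le> u" using t by (simp add: u_def)
  then show "0 \<le> ln ((1 + t) / (1 - t))" by (simp add: u_def)
  have "1 - t\<^sup>2 \<le> 2 * (1 - t)"
  proof -
    have "1 - t\<^sup>2 = (1 - t) * (1 + t)" by (simp add: power2_eq_square algebra_simps)
    also have "\<dots> \<le> (1 - t) * 2" using t by (intro mult_left_mono) auto
    finally show ?thesis by simp
  qed
  then have omt: "\<delta> * \<delta> / 8 \<le> 1 - t" using tt by simp
  have dd: "0 < \<delta> * \<delta> / 8" using d by simp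
  have "u \<le> 2 / (\<delta> * \<delta> / 8)"
    unfolding u_def using t omt dd by (intro frac_le) auto
  also have "\<dots> = 16 * (1 / \<delta>)\<^sup>2" using d by (simp add: power2_eq_square field_simps)
  also have "\<dots> \<le> (1 / \<delta>) ^ 4 * (1 / \<delta>)\<^sup>2"
  proof -
    have "2 \<le> 1 / \<delta>" using d by (simp add: field_simps)
    then have "2 ^ 4 \<le> (1 / \<delta>) ^ 4" by (rule power_mono) simp
    then show ?thesis by (intro mult_right_mono) auto
  qed
  also have "\<dots> = (1 / \<delta>) ^ 6" by (simp add: power_add[symmetric])
  finally have u6: "u \<le> (1 / \<delta>) ^ 6" .
  define L where "L = - ln \<delta>"
  have "ln u \<le> ln ((1 / \<delta>) ^ 6)" using u6 u1 d by (subst ln_le_cancel_iff) auto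
  also have "\<dots> = 6 * L" using d by (simp add: ln_realpow ln_div L_def)
  finally have DL: "ln u \<le> 6 * L" .
  have L2: "1/2 \<le> L"
  proof -
    have "ln \<delta> \<le> \<delta> - 1" using d by (intro ln_le_minus_one) auto
    then show ?thesis using d by (simp add: L_def)
  qed
  have D0: "0 \<le> ln u" using u1 by simp
  have "(ln u)\<^sup>2 \<le> (6 * L)\<^sup>2" by (rule power_mono[OF DL D0])
  moreover have "3 \<le> 12 * L\<^sup>2"
  proof -
    have "(1/2)\<^sup>2 \<le> L\<^sup>2" by (rule power_mono[OF L2]) simp
    then show ?thesis by (simp add: power2_eq_square)
  qed
  ultimately have "3 + (ln u)\<^sup>2 \<le> 48 * L\<^sup>2" by (simp add: power_mult_distrib)
  then show "3 + (ln ((1 + t) / (1 - t)))\<^sup>2 \<le> 48 * (ln \<delta>)\<^sup>2" by (simp add: u_def L_def)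
qed

theorem corollary3p12:
  shows "\<exists>C::real. \<forall>\<delta>::real. \<forall>x y :: complex.
           0 < \<delta> \<and> \<delta> < 1/2 \<and> x \<in> cball 0 (1 - \<delta>) \<and> y \<in> cball 0 (1 - \<delta>) \<longrightarrow>
           (\<exists>f K. (\<exists>g. homeomorphism (cball 0 1) (cball 0 1) f g) \<and>
                  (\<forall>z. cmod z = 1 \<longrightarrow> f z = z) \<and>
                  quasiconformal_on K (ball 0 1) f \<and>
                  K \<le> C * (ln \<delta>)\<^sup>2 \<and>
                  f x = y)"
proof (intro exI[of _ 48] allI impI)
  fix \<delta> :: real and x y :: complex
  assume H: "0 < \<delta> \<and> \<delta> < 1/2 \<and> x \<in> cball 0 (1 - \<delta>) \<and> y \<in> cball 0 (1 - \<delta>)"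
  then have d: "0 < \<delta>" "\<delta> < 1/2" and xd: "cmod x \<le> 1 - \<delta>" and yd: "cmod y \<le> 1 - \<delta>" by auto
  have x: "cmod x < 1" and y: "cmod y < 1" using xd yd d by auto
  define b0 where "b0 = Aut x 1 y"
  define l where "l = (if b0 = 0 then 1 else cnj b0 / of_real (cmod b0))"
  define t where "t = cmod b0"
  have l1: "cmod l = 1" by (simp add: l_def norm_divide)
  have Ay: "Aut x l y = of_real t"
  proof -
    have "Aut x l y = l * b0" by (simp add: Aut_def b0_def)
    also have "\<dots> = of_real t"
    proof (cases "b0 = 0")
      case True then show ?thesis by (simp add: l_def t_def)
    next
      case False
      have "cnj b0 * b0 = of_real ((cmod b0)\<^sup>2)" using complex_norm_square[of b0] by (simp add: mult.commute)
      then show ?thesis using False by (simp add: l_def t_def power2_eq_square)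
    qed
    finally show ?thesis .
  qed
  have nzy: "1 - cnj x * y \<noteq> 0" using aut_denom[OF x] y by simp
  have t0: "0 \<le> t" by (simp add: t_def)
  have t1: "t < 1" unfolding t_def b0_def using aut_ball[of 1 x y] x y by simp
  have tt: "\<delta> * \<delta> / 4 \<le> 1 - t\<^sup>2"
  proof -
    have eq: "1 - t\<^sup>2 = (1 - (cmod x)\<^sup>2) * (1 - (cmod y)\<^sup>2) / (cmod (1 - cnj x * y))\<^sup>2"
      unfolding t_def b0_def by (rule aut_norm[OF _ nzy]) simp
    have ax: "\<delta> \<le> 1 - (cmod x)\<^sup>2" using one_minus_sq_ge[OF norm_ge_zero xd] d by simp
    have ay: "\<delta> \<le> 1 - (cmod y)\<^sup>2" using one_minus_sq_ge[OF norm_ge_zero yd] d by simp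
    have dn: "cmod (1 - cnj x * y) \<le> 2"
    proof -
      have "cmod (1 - cnj x * y) \<le> 1 + cmod (cnj x * y)" using norm_triangle_ineq4[of 1 "cnj x * y"] by simp
      also have "cmod (cnj x * y) \<le> 1" using x y by (simp add: norm_mult mult_le_one less_imp_le)
      finally show ?thesis by simp
    qed
    have dn2: "(cmod (1 - cnj x * y))\<^sup>2 \<le> 4"
      using power_mono[OF dn norm_ge_zero, of 2] by simp
    have dp: "0 < (cmod (1 - cnj x * y))\<^sup>2" using nzy by simp
    have "\<delta> * \<delta> \<le> (1 - (cmod x)\<^sup>2) * (1 - (cmod y)\<^sup>2)"
      using ax ay d by (intro mult_mono) auto
    then have "\<delta> * \<delta> / 4 \<le> (1 - (cmod x)\<^sup>2) * (1 - (cmod y)\<^sup>2) / (cmod (1 - cnj x * y))\<^sup>2"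
      using dp dn2 ax ay d by (intro frac_le) auto
    then show ?thesis unfolding eq .
  qed
  define D where "D = ln ((1 + t) / (1 - t))"
  have KB: "3 + D\<^sup>2 \<le> 48 * (ln \<delta>)\<^sup>2" and D0: "0 \<le> D"
    unfolding D_def using D_bound[OF d t0 t1 tt] by auto
  have tanhD: "tanh (D / 2) = t"
  proof -
    define u where "u = (1 + t) / (1 - t)"
    have u: "0 < u" using t0 t1 by (simp add: u_def)
    have "D / 2 = ln (sqrt u)" using u by (simp add: D_def u_def ln_sqrt)
    then have "tanh (D / 2) = ((sqrt u)\<^sup>2 - 1) / ((sqrt u)\<^sup>2 + 1)"
      using u by (simp add: tanh_ln_real)
    also have "\<dots> = (u - 1) / (u + 1)" using u by simp
    also have "\<dots> = t" using t1 by (simp add: u_def field_simps)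
    finally show ?thesis .
  qed
  define f where "f = (\<lambda>z. Aut (-(l * x)) (cnj l) (f0 D (Aut x l z)))"
  show "\<exists>f K. (\<exists>g. homeomorphism (cball 0 1) (cball 0 1) f g) \<and>
                  (\<forall>z. cmod z = 1 \<longrightarrow> f z = z) \<and>
                  quasiconformal_on K (ball 0 1) f \<and>
                  K \<le> 48 * (ln \<delta>)\<^sup>2 \<and> f x = y"
  proof -
    have h1: "homeomorphism (cball 0 1) (cball 0 1) f (\<lambda>z. Aut (-(l * x)) (cnj l) (g0 D (Aut x l z)))"
      unfolding f_def by (rule conj_homeo[OF l1 x D0])
    have h2: "\<forall>z. cmod z = 1 \<longrightarrow> f z = z"
      unfolding f_def using conj_sphere[OF l1 x] by blast
    have h3: "quasiconformal_on (3 + D\<^sup>2) (ball 0 1) f"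
      unfolding f_def by (rule conj_qc[OF l1 x D0])
    have Ax: "Aut x l x = 0" by (simp add: Aut_def)
    have "f x = Aut (-(l * x)) (cnj l) (of_real (tanh (D / 2)))"
      unfolding f_def Ax f0_0 ..
    also have "\<dots> = Aut (-(l * x)) (cnj l) (Aut x l y)" unfolding tanhD Ay ..
    also have "\<dots> = y" using aut_inv[OF l1 x nzy] .
    finally have h5: "f x = y" .
    show ?thesis using h1 h2 h3 KB h5 by blast
  qed
qed

end
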